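(* For every integer $k\ge 1$ we have $I_k\subseteq W_k$.
   Context: Let $K$ be a field and $A$ the free associative (non-unital) $K$-algebra on countably many free generators $x_0,x_1,x_2,\dots$; the monomials $x_{i_1}\cdots x_{i_n}$ ($n\ge1$, $i_j\ge 0$) form a $K$-basis of $A$. Let $A^1$ be $A$ with a unity adjoined. For $n\ge1$ let $A(n)$ be the $K$-span of monomials of length $n$, and let $A(0)=K$ (scalars in $A^1$). Let $D$ be the unique derivation of $A$ with $D(x_i)=x_{i+1}$ for all $i$. For $k\ge1$ let $\mathcal X_k=\{x_0,\dots,x_{k-1}\}$. For $n\ge1$ let $W(k,n,0)$ be the set of monomials $x_{i_1}\cdots x_{i_n}$ of length $n$ with all $x_{i_j}\in\mathcal X_k$, let $W(k,n,l+1)=\{D(w): w\in W(k,n,l)\}$, and $W(k,n)=\bigcup_{t\ge0}W(k,n,t)$. Let $I_k$ be the two-sided ideal of $A$ generated by $W(k,2\cdot 100^{k^2})$, and let $W_k=\sum_{m\ge0}A(m\cdot 100^{k^2})\,W(k,100^{k^2})\,A^1$ (the $K$-linear span of products $u w v$ with $u\in A(m\cdot100^{k^2})$ for some $m\ge0$, $w\in W(k,100^{k^2})$, $v\in A^1$). *)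

theory Defs
  imports Main
begin

text \<open>Elements of the unital free algebra A^1 over the field 'k on generators x_0, x_1, ...
  are finitely supported coefficient functions on words (nat list); the word [i1,...,in]
  stands for the monomial x_i1 ... x_in, and [] stands for the unity.\<close>

type_synonym 'k fa = "nat list \<Rightarrow> 'k"

definition fin_supp :: "'k::zero fa \<Rightarrow> bool" where
  "fin_supp f \<longleftrightarrow> finite {w. f w \<noteq> 0}"

definition A1 :: "'k::field fa set" where
  "A1 = {f. fin_supp f}"

definition A :: "'k::field fa set" where
  "A = {f. fin_supp f \<and> f [] = 0}"

definition mono :: "nat list \<Rightarrow> 'k::field fa" where
  "mono w = (\<lambda>v. if v = w then 1 else 0)"

definition fzero :: "'k::field fa" where "fzero = (\<lambda>_. 0)"
definition fadd :: "'k::field fa \<Rightarrow> 'k fa \<Rightarrow> 'k fa" where "fadd f g = (\<lambda>w. f w + g w)"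
definition fscale :: "'k::field \<Rightarrow> 'k fa \<Rightarrow> 'k fa" where "fscale c f = (\<lambda>w. c * f w)"

text \<open>Multiplication: concatenation of monomials, extended bilinearly.\<close>
definition fmult :: "'k::field fa \<Rightarrow> 'k fa \<Rightarrow> 'k fa" where
  "fmult f g = (\<lambda>w. \<Sum>i\<le>length w. f (take i w) * g (drop i w))"

inductive_set kspan :: "'k::field fa set \<Rightarrow> 'k fa set" for S where
  span_zero: "fzero \<in> kspan S"
| span_gen: "s \<in> S \<Longrightarrow> s \<in> kspan S"
| span_add: "f \<in> kspan S \<Longrightarrow> g \<in> kspan S \<Longrightarrow> fadd f g \<in> kspan S"
| span_scale: "f \<in> kspan S \<Longrightarrow> fscale c f \<in> kspan S"

text \<open>The derivation D with D(x_i) = x_(i+1): on a monomial,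
  D(x_i1...x_in) = sum_j x_i1 ... x_(ij+1) ... x_in; the coefficient formula below is
  its K-linear extension.\<close>
definition Dder :: "'k::field fa \<Rightarrow> 'k fa" where
  "Dder f = (\<lambda>v. \<Sum>j<length v. if 0 < v ! j then f (v[j := v ! j - 1]) else 0)"

definition Adeg :: "nat \<Rightarrow> 'k::field fa set" where
  "Adeg n = kspan {mono w | w. length w = n}"

definition W0 :: "nat \<Rightarrow> nat \<Rightarrow> 'k::field fa set" where
  "W0 k n = {mono w | w. length w = n \<and> (\<forall>i\<in>set w. i < k)}"

definition Wl :: "nat \<Rightarrow> nat \<Rightarrow> nat \<Rightarrow> 'k::field fa set" where
  "Wl k n l = (Dder ^^ l) ` W0 k n"

definition Wset :: "nat \<Rightarrow> nat \<Rightarrow> 'k::field fa set" where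
  "Wset k n = (\<Union>t. Wl k n t)"

definition is_ideal :: "'k::field fa set \<Rightarrow> bool" where
  "is_ideal J \<longleftrightarrow> J \<subseteq> A \<and> fzero \<in> J \<and>
     (\<forall>f\<in>J. \<forall>g\<in>J. fadd f g \<in> J) \<and> (\<forall>c. \<forall>f\<in>J. fscale c f \<in> J) \<and>
     (\<forall>a\<in>A. \<forall>f\<in>J. fmult a f \<in> J \<and> fmult f a \<in> J)"

definition ideal_gen :: "'k::field fa set \<Rightarrow> 'k fa set" where
  "ideal_gen S = \<Inter>{J. is_ideal J \<and> S \<subseteq> J}"

definition Ik :: "nat \<Rightarrow> 'k::field fa set" where
  "Ik k = ideal_gen (Wset k (2 * 100 ^ (k\<^sup>2)))"

definition Wk :: "nat \<Rightarrow> 'k::field fa set" where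
  "Wk k = kspan {fmult (fmult u w) v | u w v m.
      u \<in> Adeg (m * 100 ^ (k\<^sup>2)) \<and> w \<in> Wset k (100 ^ (k\<^sup>2)) \<and> v \<in> A1}"

end

theory Submission imports Defs "HOL-Library.Function_Algebras" begin

lemma fadd_eq: "fadd f g = f + g" by (auto simp: fadd_def)
lemma fzero_eq: "fzero = 0" by (auto simp: fzero_def)

lemma fmult_assoc: "fmult (fmult f g) h = fmult f (fmult g h)"
proof
  fix w :: "nat list"
  let ?n = "length w"
  define G where "G j t = f (take j w) * g (take t (drop j w)) * h (drop (j+t) w)" for j t
  have "fmult (fmult f g) h w = (\<Sum>i\<le>?n. \<Sum>j\<le>i. G j (i - j))"
    unfolding fmult_def G_def
    by (auto simp: sum_distrib_right min_def drop_take intro!: sum.cong)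
  also have "\<dots> = (\<Sum>(j,t)\<in>{(j,t). j+t \<le> ?n}. G j t)"
    by (rule sum.triangle_reindex_eq[symmetric])
  also have "{(j,t). j+t \<le> ?n} = Sigma {..?n} (\<lambda>j. {..?n-j})" by auto
  also have "(\<Sum>(j,t)\<in>Sigma {..?n} (\<lambda>j. {..?n-j}). G j t) = (\<Sum>j\<le>?n. \<Sum>t\<le>?n-j. G j t)"
    by (rule sum.Sigma[symmetric]) auto
  also have "\<dots> = fmult f (fmult g h) w"
    unfolding fmult_def G_def
    by (auto simp: sum_distrib_left mult.assoc add.commute intro!: sum.cong)
  finally show "fmult (fmult f g) h w = fmult f (fmult g h) w" .
qed

lemma fmult_add_left: "fmult (f + g) h = fmult f h + fmult g h"
  by (auto simp: fmult_def distrib_right sum.distrib)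
lemma fmult_add_right: "fmult h (f + g) = fmult h f + fmult h g"
  by (auto simp: fmult_def distrib_left sum.distrib)
lemma fmult_zero_left[simp]: "fmult 0 h = 0"
  by (auto simp: fmult_def)
lemma fmult_zero_right[simp]: "fmult h 0 = 0"
  by (auto simp: fmult_def)
lemma fmult_scale_left: "fmult (fscale c f) h = fscale c (fmult f h)"
  by (auto simp: fmult_def fscale_def sum_distrib_left mult.assoc)
lemma fmult_scale_right: "fmult h (fscale c f) = fscale c (fmult h f)"
  by (auto simp: fmult_def fscale_def sum_distrib_left mult.assoc mult.left_commute)
lemma fmult_sum_left: "fmult (\<Sum>x\<in>F. a x) h = (\<Sum>x\<in>F. fmult (a x) h)"
proof (induction F rule: infinite_finite_induct)
  case (insert x F)
  then show ?case by (metis sum.insert fmult_add_left)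
qed (metis sum.infinite sum.empty fmult_zero_left)+

lemma fmult_mono_left: "fmult (mono u) f w =
   (if length u \<le> length w \<and> take (length u) w = u then f (drop (length u) w) else 0)"
proof -
  have "fmult (mono u) f w = (\<Sum>i\<le>length w. if i = length u then
      (if length u \<le> length w \<and> take (length u) w = u then f (drop (length u) w) else 0) else 0)"
    unfolding fmult_def
  proof (intro sum.cong refl)
    fix x assume x: "x \<in> {..length w}"
    show "mono u (take x w) * f (drop x w) = (if x = length u then
      (if length u \<le> length w \<and> take (length u) w = u then f (drop (length u) w) else 0) else 0)"
      using x by (auto simp: mono_def min_def split: if_splits)
  qed
  then show ?thesis by simp
qed

lemma mono_mult: "fmult (mono u) (mono v) = mono (u @ v)"
proof
  fix w :: "nat list"
  show "fmult (mono u) (mono v) w = mono (u @ v) w"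
    unfolding fmult_mono_left by (auto simp: mono_def, metis append_take_drop_id)
qed

lemma mono_Nil_left: "fmult (mono []) f = f"
  by (auto simp: fmult_def mono_def sum.atMost_shift)
lemma mono_Nil_right: "fmult f (mono []) = f"
proof
  fix w :: "nat list"
  show "fmult f (mono []) w = f w"
  proof -
    have "fmult f (mono []) w = (\<Sum>i\<le>length w. if i = length w then f (take i w) else 0)"
      unfolding fmult_def mono_def by (intro sum.cong) auto
    then show ?thesis by simp
  qed
qed

lemma Dder_add: "Dder (f + g) = Dder f + Dder g"
  by (auto simp: Dder_def sum.distrib[symmetric] plus_fun_def intro!: sum.cong ext)
lemma Dder_zero[simp]: "Dder 0 = 0"
  by (auto simp: Dder_def zero_fun_def)
lemma Dder_scale: "Dder (fscale c f) = fscale c (Dder f)"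
  by (auto simp: Dder_def fscale_def sum_distrib_left intro!: sum.cong ext)

lemma Dder_mult: "Dder (fmult f g) = fmult (Dder f) g + fmult f (Dder g)"
proof
  fix v :: "nat list"
  define n where "n = length v"
  define H where "H i j = (if 0 < v!j then f (take i (v[j := v!j - 1])) * g (drop i (v[j := v!j - 1])) else 0)" for i j
  have "Dder (fmult f g) v = (\<Sum>j<n. \<Sum>i\<le>n. H i j)"
    unfolding Dder_def fmult_def H_def n_def by (auto intro!: sum.cong)
  also have "\<dots> = (\<Sum>i\<le>n. \<Sum>j<n. H i j)" by (rule sum.swap)
  also have "\<dots> = (\<Sum>i\<le>n. (\<Sum>j<i. H i j) + (\<Sum>j\<in>{i..<n}. H i j))"
  proof (intro sum.cong refl)
    fix i assume "i \<in> {..n}"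
    then have "{..<n} = {..<i} \<union> {i..<n}" by auto
    then show "(\<Sum>j<n. H i j) = (\<Sum>j<i. H i j) + (\<Sum>j\<in>{i..<n}. H i j)"
      by (simp add: sum.union_disjoint ivl_disj_int(2))
  qed
  also have "\<dots> = (\<Sum>i\<le>n. Dder f (take i v) * g (drop i v)) + (\<Sum>i\<le>n. f (take i v) * Dder g (drop i v))"
    unfolding sum.distrib[symmetric]
  proof (intro sum.cong refl arg_cong2[where f="(+)"])
    fix i assume i: "i \<in> {..n}"
    show "(\<Sum>j<i. H i j) = Dder f (take i v) * g (drop i v)"
      unfolding Dder_def sum_distrib_right
    proof (intro sum.cong)
      show "{..<i} = {..<length (take i v)}" using i by (simp add: n_def)
    next
      fix x assume x: "x \<in> {..<length (take i v)}"
      then have "x < i" by simp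
      then show "H i x = (if 0 < take i v ! x then f ((take i v)[x := take i v ! x - 1]) else 0) * g (drop i v)"
        by (simp add: H_def take_update_swap)
    qed
    have "(\<Sum>j\<in>{i..<n}. H i j) = (\<Sum>j\<in>{0+i..<(n-i)+i}. H i j)" using i by simp
    also have "\<dots> = (\<Sum>j\<in>{0..<n-i}. H i (j+i))" by (rule sum.shift_bounds_nat_ivl)
    also have "\<dots> = f (take i v) * Dder g (drop i v)"
      unfolding Dder_def sum_distrib_left using i
      by (intro sum.cong) (auto simp: H_def n_def drop_update_swap add.commute atLeast0LessThan)
    finally show "(\<Sum>j\<in>{i..<n}. H i j) = f (take i v) * Dder g (drop i v)" .
  qed
  also have "\<dots> = (fmult (Dder f) g + fmult f (Dder g)) v"
    by (simp add: fmult_def n_def)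
  finally show "Dder (fmult f g) v = (fmult (Dder f) g + fmult f (Dder g)) v" .
qed

lemma fmult_nz: "fmult f g w \<noteq> 0 \<Longrightarrow> \<exists>i\<le>length w. f (take i w) \<noteq> 0 \<and> g (drop i w) \<noteq> 0"
proof (rule ccontr)
  assume a: "fmult f g w \<noteq> 0" "\<not> (\<exists>i\<le>length w. f (take i w) \<noteq> 0 \<and> g (drop i w) \<noteq> 0)"
  then have "fmult f g w = 0" unfolding fmult_def by (intro sum.neutral) auto
  with a show False by simp
qed

lemma Dder_nz: "Dder f v \<noteq> 0 \<Longrightarrow> \<exists>j<length v. 0 < v!j \<and> f (v[j := v!j - 1]) \<noteq> 0"
proof (rule ccontr)
  assume a: "Dder f v \<noteq> 0" "\<not> (\<exists>j<length v. 0 < v!j \<and> f (v[j := v!j - 1]) \<noteq> 0)"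
  then have "Dder f v = 0" unfolding Dder_def by (intro sum.neutral) auto
  with a show False by simp
qed

lemma fin_supp_mono: "fin_supp (mono w)"
  unfolding fin_supp_def mono_def by auto

lemma fin_supp_fmult: assumes "fin_supp f" "fin_supp g" shows "fin_supp (fmult f g)"
proof -
  have "{w. fmult f g w \<noteq> 0} \<subseteq> (\<lambda>(x,y). x @ y) ` ({w. f w \<noteq> 0} \<times> {w. g w \<noteq> 0})"
  proof
    fix w assume "w \<in> {w. fmult f g w \<noteq> 0}"
    then obtain i where "f (take i w) \<noteq> 0" "g (drop i w) \<noteq> 0" using fmult_nz by blast
    then show "w \<in> (\<lambda>(x,y). x @ y) ` ({w. f w \<noteq> 0} \<times> {w. g w \<noteq> 0})"
      by (intro image_eqI[where x="(take i w, drop i w)"]) auto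
  qed
  then show ?thesis using assms unfolding fin_supp_def by (meson finite_SigmaI finite_imageI finite_subset)
qed

lemma fin_supp_Dder: assumes "fin_supp f" shows "fin_supp (Dder f)"
proof -
  have "{v. Dder f v \<noteq> 0} \<subseteq> (\<lambda>(u,j). u[j := u!j + 1]) ` (Sigma {w. f w \<noteq> 0} (\<lambda>u. {..<length u}))"
  proof
    fix v assume "v \<in> {v. Dder f v \<noteq> 0}"
    then obtain j where j: "j < length v" "0 < v!j" "f (v[j := v!j - 1]) \<noteq> 0" using Dder_nz by blast
    then show "v \<in> (\<lambda>(u,j). u[j := u!j + 1]) ` (Sigma {w. f w \<noteq> 0} (\<lambda>u. {..<length u}))"
      by (intro image_eqI[where x="(v[j := v!j - 1], j)"]) auto
  qed
  moreover have "finite (Sigma {w. f w \<noteq> 0} (\<lambda>u. {..<length u}))"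
    using assms unfolding fin_supp_def by (intro finite_SigmaI) auto
  ultimately show ?thesis unfolding fin_supp_def by (meson finite_imageI finite_subset)
qed

lemma fin_supp_add: "fin_supp (f::'k::field fa) \<Longrightarrow> fin_supp g \<Longrightarrow> fin_supp (f + g)"
  unfolding fin_supp_def
  by (rule finite_subset[of _ "{w. f w \<noteq> 0} \<union> {w. g w \<noteq> 0}"]) auto
lemma fin_supp_scale: "fin_supp (f::'k::field fa) \<Longrightarrow> fin_supp (fscale c f)"
  unfolding fin_supp_def fscale_def
  by (rule finite_subset[of _ "{w. f w \<noteq> 0}"]) auto
lemma fin_supp_zero: "fin_supp (0::'k::field fa)"
  unfolding fin_supp_def by simp

lemma kspan_add: "f \<in> kspan S \<Longrightarrow> g \<in> kspan S \<Longrightarrow> f + g \<in> kspan S"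
  using kspan.span_add[of f S g] by (simp add: fadd_eq)
lemma kspan_zero: "0 \<in> kspan S"
  using kspan.span_zero[of S] by (simp add: fzero_eq)
lemma kspan_sum: "(\<And>x. x \<in> F \<Longrightarrow> h x \<in> kspan S) \<Longrightarrow> sum h F \<in> kspan S"
  by (induction F rule: infinite_finite_induct) (auto simp: kspan_zero kspan_add)

lemma kspan_induct_closed:
  assumes "f \<in> kspan S" "0 \<in> P" "\<And>f g. f \<in> P \<Longrightarrow> g \<in> P \<Longrightarrow> f + g \<in> P"
    "\<And>c f. f \<in> P \<Longrightarrow> fscale c f \<in> P" "S \<subseteq> P"
  shows "f \<in> P"
  using assms(1)
proof induction
  case span_zero then show ?case unfolding fzero_eq by (rule assms(2))
next
  case (span_gen s) then show ?case using assms(5) by auto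
next
  case (span_add f g) then show ?case unfolding fadd_eq using assms(3) by blast
next
  case (span_scale f c) then show ?case using assms(4) by simp
qed

lemma sum_fun_apply: "(sum h F) v = (\<Sum>x\<in>F. h x v)"
  by (induction F rule: infinite_finite_induct) auto

lemma finsupp_decomp: assumes "fin_supp f"
  shows "f = (\<Sum>w\<in>{w. f w \<noteq> 0}. fscale (f w) (mono w))"
proof
  fix v
  have fin: "finite {w. f w \<noteq> 0}" using assms by (simp add: fin_supp_def)
  have "(\<Sum>w\<in>{w. f w \<noteq> 0}. fscale (f w) (mono w)) v = (\<Sum>w\<in>{w. f w \<noteq> 0}. fscale (f w) (mono w) v)"
    by (rule sum_fun_apply)
  also have "\<dots> = (\<Sum>w\<in>{w. f w \<noteq> 0}. if w = v then f v else 0)"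
    by (intro sum.cong) (auto simp: fscale_def mono_def)
  also have "\<dots> = f v" using fin by (simp add: sum.delta)
  finally show "f v = (\<Sum>w\<in>{w. f w \<noteq> 0}. fscale (f w) (mono w)) v" by simp
qed

definition HF :: "nat \<Rightarrow> 'k::field fa set" where
  "HF n = {f. fin_supp f \<and> (\<forall>w. f w \<noteq> 0 \<longrightarrow> length w = n)}"

lemma Adeg_HF: "Adeg n = HF n"
proof
  show "Adeg n \<subseteq> HF n"
    unfolding Adeg_def
  proof
    fix f assume "f \<in> kspan {mono w | w. length w = n}"
    then show "f \<in> HF n"
    proof (rule kspan_induct_closed)
      show "0 \<in> HF n" by (simp add: HF_def fin_supp_zero)
      show "f + g \<in> HF n" if "f \<in> HF n" "g \<in> HF n" for f g
        using that by (auto simp: HF_def fin_supp_add, metis add.right_neutral)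
      show "fscale c f \<in> HF n" if "f \<in> HF n" for c f
        using that fin_supp_scale[of f c] by (auto simp: HF_def fscale_def)
      show "{mono w | w. length w = n} \<subseteq> HF n"
      proof
        fix x assume "x \<in> {mono w | w. length w = n}"
        then obtain w where "x = mono w" "length w = n" by blast
        then show "x \<in> HF n" unfolding HF_def using fin_supp_mono[of w]
          by (auto simp: mono_def split: if_splits)
      qed
    qed
  qed
next
  show "HF n \<subseteq> Adeg n"
  proof
    fix f assume f: "f \<in> HF n"
    then have "f = (\<Sum>w\<in>{w. f w \<noteq> 0}. fscale (f w) (mono w))" by (simp add: HF_def finsupp_decomp)
    also have "\<dots> \<in> Adeg n" unfolding Adeg_def
      using f by (intro kspan_sum kspan.span_scale kspan.span_gen) (auto simp: HF_def)
    finally show "f \<in> Adeg n" .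
  qed
qed

lemma HF_mult: assumes "f \<in> HF a" "g \<in> HF b" shows "fmult f g \<in> HF (a + b)"
proof -
  have "length w = a + b" if nz: "fmult f g w \<noteq> 0" for w
  proof -
    obtain i where i: "i \<le> length w" "f (take i w) \<noteq> 0" "g (drop i w) \<noteq> 0"
      using fmult_nz[OF nz] by blast
    then have "length (take i w) = a" "length (drop i w) = b" using assms by (auto simp: HF_def)
    then show ?thesis using i(1) by simp
  qed
  then show ?thesis using assms by (auto simp: HF_def fin_supp_fmult)
qed

lemma HF_Dder: assumes "f \<in> HF n" shows "Dder f \<in> HF n"
proof -
  have "length w = n" if nz: "Dder f w \<noteq> 0" for w
  proof -
    obtain j where j: "j < length w" "f (w[j := w!j - 1]) \<noteq> 0" using Dder_nz[OF nz] by blast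
    then show ?thesis using assms by (auto simp: HF_def)
  qed
  then show ?thesis using assms by (auto simp: HF_def fin_supp_Dder)
qed

lemma Adeg_mult: "f \<in> Adeg a \<Longrightarrow> g \<in> Adeg b \<Longrightarrow> fmult f g \<in> Adeg (a + b)"
  using HF_mult by (simp add: Adeg_HF)
lemma Adeg_Dder: "f \<in> Adeg n \<Longrightarrow> Dder f \<in> Adeg n"
  using HF_Dder by (simp add: Adeg_HF)
lemma mono_Adeg: "mono w \<in> Adeg (length w)"
  unfolding Adeg_def by (rule kspan.span_gen) blast

lemma A1_mult: "f \<in> A1 \<Longrightarrow> g \<in> A1 \<Longrightarrow> fmult f g \<in> A1"
  by (simp add: A1_def fin_supp_fmult)
lemma A1_Dder: "f \<in> A1 \<Longrightarrow> Dder f \<in> A1"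
  by (simp add: A1_def fin_supp_Dder)
lemma mono_A1: "mono w \<in> A1"
  by (simp add: A1_def fin_supp_mono)
lemma A_A1: "f \<in> A \<Longrightarrow> f \<in> A1"
  by (simp add: A_def A1_def)

lemma Wset_Dder: "y \<in> Wset k n \<Longrightarrow> Dder y \<in> Wset k n"
proof -
  assume "y \<in> Wset k n"
  then obtain l x where "x \<in> W0 k n" "y = (Dder ^^ l) x" by (auto simp: Wset_def Wl_def)
  then have "Dder y = (Dder ^^ Suc l) x" by simp
  then show ?thesis using \<open>x \<in> W0 k n\<close> unfolding Wset_def Wl_def
    by (intro UN_I[of "Suc l"]) auto
qed

lemma funpow_Dder_nil: "(Dder ^^ l) f [] = (if l = 0 then f [] else 0)"
  by (cases l) (auto simp: Dder_def)

lemma Wset_A: assumes "y \<in> Wset k n" "0 < n" shows "y \<in> A"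
proof -
  obtain l w where w: "length w = n" "y = (Dder ^^ l) (mono w)" using assms(1)
    by (auto simp: Wset_def Wl_def W0_def)
  have fs: "fin_supp ((Dder ^^ l) (mono w) :: 'a fa)"
    by (induction l) (auto simp: fin_supp_mono fin_supp_Dder)
  have "(Dder ^^ l) (mono w) [] = (0::'a)"
    using w assms(2) by (auto simp: funpow_Dder_nil mono_def)
  then show ?thesis using fs w by (simp add: A_def)
qed

definition TT :: "nat \<Rightarrow> nat \<Rightarrow> nat \<Rightarrow> 'k::field fa set" where
  "TT k N n = kspan {fmult (fmult x y) z | x y z. x \<in> Adeg n \<and> y \<in> Wset k N \<and> z \<in> A1}"

lemma TT_add: "f \<in> TT k N n \<Longrightarrow> g \<in> TT k N n \<Longrightarrow> f + g \<in> TT k N n"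
  unfolding TT_def by (rule kspan_add)
lemma TT_zero: "0 \<in> TT k N n"
  unfolding TT_def by (rule kspan_zero)
lemma TT_scale: "f \<in> TT k N n \<Longrightarrow> fscale c f \<in> TT k N n"
  unfolding TT_def by (rule kspan.span_scale)
lemma TT_gen: "x \<in> Adeg n \<Longrightarrow> y \<in> Wset k N \<Longrightarrow> z \<in> A1 \<Longrightarrow> fmult (fmult x y) z \<in> TT k N n"
  unfolding TT_def by (rule kspan.span_gen) blast

lemma TT_Dder: fixes t :: "'k::field fa" assumes "t \<in> TT k N n" shows "Dder t \<in> TT k N n"
proof -
  have "t \<in> {t. Dder t \<in> TT k N n}"
    using assms[unfolded TT_def]
  proof (rule kspan_induct_closed)
    show "0 \<in> {t. Dder t \<in> TT k N n}" by (simp add: TT_zero)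
    show "f + g \<in> {t. Dder t \<in> TT k N n}"
      if "f \<in> {t. Dder t \<in> TT k N n}" "g \<in> {t. Dder t \<in> TT k N n}" for f g
      using that by (simp add: Dder_add TT_add)
    show "fscale c f \<in> {t. Dder t \<in> TT k N n}"
      if "f \<in> {t. Dder t \<in> TT k N n}" for c f
      using that by (simp add: Dder_scale TT_scale)
    show "{fmult (fmult x y) z | x y z. x \<in> Adeg n \<and> y \<in> Wset k N \<and> z \<in> A1} \<subseteq> {t. Dder t \<in> TT k N n}"
    proof
      fix t assume "t \<in> {fmult (fmult x y) z | x y z. x \<in> Adeg n \<and> y \<in> Wset k N \<and> z \<in> A1}"
      then obtain x y z where t: "t = fmult (fmult x y) z" and xyz: "x \<in> Adeg n" "y \<in> Wset k N" "z \<in> A1" by blast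
      have e: "Dder (fmult (fmult x y) z) = fmult (fmult (Dder x) y) z + fmult (fmult x (Dder y)) z
         + fmult (fmult x y) (Dder z)"
        by (simp add: Dder_mult fmult_add_left)
      show "t \<in> {t. Dder t \<in> TT k N n}"
        unfolding t mem_Collect_eq e using xyz
        by (intro TT_add TT_gen) (auto intro: Adeg_Dder Wset_Dder A1_Dder)
    qed
  qed
  then show ?thesis by simp
qed

lemma TT_funpow: "t \<in> TT k N n \<Longrightarrow> (Dder ^^ l) t \<in> TT k N n"
  by (induction l) (auto intro: TT_Dder)

lemma Wk_gen: "x \<in> Adeg (m * 100^(k\<^sup>2)) \<Longrightarrow> y \<in> Wset k (100^(k\<^sup>2)) \<Longrightarrow> z \<in> A1 \<Longrightarrow> fmult (fmult x y) z \<in> Wk k"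
  unfolding Wk_def by (rule kspan.span_gen) blast
lemma Wk_add: "f \<in> Wk k \<Longrightarrow> g \<in> Wk k \<Longrightarrow> f + g \<in> Wk k"
  unfolding Wk_def by (rule kspan_add)
lemma Wk_zero: "0 \<in> Wk k"
  unfolding Wk_def by (rule kspan_zero)
lemma Wk_scale: "f \<in> Wk k \<Longrightarrow> fscale c f \<in> Wk k"
  unfolding Wk_def by (rule kspan.span_scale)
lemma Wk_sum: "(\<And>x. x \<in> F \<Longrightarrow> h x \<in> Wk k) \<Longrightarrow> sum h F \<in> Wk k"
  unfolding Wk_def by (rule kspan_sum)

lemma TT_to_Wk:
  fixes t :: "'k::field fa"
  assumes "t \<in> TT k (100^(k\<^sup>2)) n" "b \<in> A1" "length u + n = m * 100^(k\<^sup>2)"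
  shows "fmult (fmult (mono u) t) b \<in> Wk k"
proof -
  have "t \<in> {t. fmult (fmult (mono u) t) b \<in> Wk k}"
    using assms(1)[unfolded TT_def]
  proof (rule kspan_induct_closed)
    show "0 \<in> {t. fmult (fmult (mono u) t) b \<in> Wk k}" by (simp add: Wk_zero)
    show "f + g \<in> {t. fmult (fmult (mono u) t) b \<in> Wk k}"
      if "f \<in> {t. fmult (fmult (mono u) t) b \<in> Wk k}" "g \<in> {t. fmult (fmult (mono u) t) b \<in> Wk k}" for f g
      using that by (simp add: fmult_add_left fmult_add_right Wk_add)
    show "fscale c f \<in> {t. fmult (fmult (mono u) t) b \<in> Wk k}"
      if "f \<in> {t. fmult (fmult (mono u) t) b \<in> Wk k}" for c f
      using that by (simp add: fmult_scale_left fmult_scale_right Wk_scale)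
    show "{fmult (fmult x y) z | x y z. x \<in> Adeg n \<and> y \<in> Wset k (100^(k\<^sup>2)) \<and> z \<in> A1} \<subseteq> {t. fmult (fmult (mono u) t) b \<in> Wk k}"
    proof
      fix t :: "'k fa" assume "t \<in> {fmult (fmult x y) z | x y z. x \<in> Adeg n \<and> y \<in> Wset k (100^(k\<^sup>2)) \<and> z \<in> A1}"
      then obtain x y z where t: "t = fmult (fmult x y) z" and xyz: "x \<in> Adeg n" "y \<in> Wset k (100^(k\<^sup>2))" "z \<in> A1" by blast
      have e: "fmult (fmult (mono u) t) b = fmult (fmult (fmult (mono u) x) y) (fmult z b)"
        unfolding t by (simp add: fmult_assoc)
      have "fmult (mono u) x \<in> Adeg (m * 100^(k\<^sup>2))"
        using Adeg_mult[OF mono_Adeg[of u] xyz(1)] assms(3) by simp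
      then show "t \<in> {t. fmult (fmult (mono u) t) b \<in> Wk k}"
        unfolding mem_Collect_eq e using xyz assms(2) by (intro Wk_gen A1_mult)
    qed
  qed
  then show ?thesis by simp
qed

lemma gen_mono:
  fixes b :: "'k::field fa"
  assumes w: "length w = 2 * 100^(k\<^sup>2)" "\<forall>i\<in>set w. i < k" and b: "b \<in> A1"
  shows "fmult (fmult (mono u) ((Dder^^l) (mono w))) b \<in> Wk k"
proof -
  define N :: nat where "N = 100^(k\<^sup>2)"
  have N0: "0 < N" by (simp add: N_def)
  define s where "s = length u mod N"
  have sN: "s < N" using N0 by (simp add: s_def)
  define p where "p = take (N - s) w"
  define q where "q = take N (drop (N - s) w)"
  define r where "r = drop N (drop (N - s) w)"
  have wpqr: "w = p @ q @ r" unfolding p_def q_def r_def by (simp only: append_take_drop_id)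
  have lp: "length p = N - s" using w sN by (simp add: p_def N_def)
  have lq: "length q = N" using w sN by (simp add: q_def N_def)
  have mw: "(mono w :: 'k fa) = fmult (fmult (mono p) (mono q)) (mono r)"
    by (simp add: mono_mult wpqr)
  have "mono q \<in> W0 k N" unfolding W0_def using lq w(2) wpqr by auto
  then have "(mono q :: 'k fa) \<in> Wset k N" unfolding Wset_def Wl_def by (intro UN_I[of 0]) auto
  then have "(mono w :: 'k fa) \<in> TT k N (N - s)"
    unfolding mw using mono_Adeg[of p] lp by (intro TT_gen mono_A1) auto
  then have "(Dder^^l) (mono w :: 'k fa) \<in> TT k N (N - s)" by (rule TT_funpow)
  moreover have "length u + (N - s) = (length u div N + 1) * N"
  proof -
    have "length u = length u div N * N + s" unfolding s_def by simp
    then have "length u + (N - s) = length u div N * N + (s + (N - s))" by simp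
    also have "s + (N - s) = N" using sN by simp
    finally show ?thesis by simp
  qed
  ultimately show ?thesis using b unfolding N_def by (intro TT_to_Wk)
qed

lemma gen_general:
  fixes a :: "'k::field fa"
  assumes a: "a \<in> A1" and g: "g \<in> Wset k (2 * 100^(k\<^sup>2))" and b: "b \<in> A1"
  shows "fmult (fmult a g) b \<in> Wk k"
proof -
  obtain l w where w: "length w = 2 * 100^(k\<^sup>2)" "\<forall>i\<in>set w. i < k" "g = (Dder ^^ l) (mono w)"
    using g by (auto simp: Wset_def Wl_def W0_def)
  have "a = (\<Sum>u\<in>{u. a u \<noteq> 0}. fscale (a u) (mono u))"
    using a by (simp add: A1_def finsupp_decomp)
  then have "fmult (fmult a g) b = (\<Sum>u\<in>{u. a u \<noteq> 0}. fscale (a u) (fmult (fmult (mono u) g) b))"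
    by (metis (no_types, lifting) fmult_scale_left fmult_sum_left sum.cong)
  also have "\<dots> \<in> Wk k"
    using gen_mono[OF w(1,2) b] w(3) by (intro Wk_sum Wk_scale) auto
  finally show ?thesis .
qed

definition JJ :: "nat \<Rightarrow> 'k::field fa set" where
  "JJ k = kspan {fmult (fmult a g) b | a g b. a \<in> A1 \<and> g \<in> Wset k (2 * 100^(k\<^sup>2)) \<and> b \<in> A1}"

lemma JJ_Wk: fixes f :: "'k::field fa" assumes "f \<in> JJ k" shows "f \<in> Wk k"
  using assms[unfolded JJ_def]
proof (rule kspan_induct_closed)
  show "0 \<in> Wk k" by (rule Wk_zero)
  show "f + g \<in> Wk k" if "f \<in> Wk k" "g \<in> Wk k" for f g :: "'k fa" using that by (rule Wk_add)
  show "fscale c f \<in> Wk k" if "f \<in> Wk k" for c f using that by (rule Wk_scale)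
  show "{fmult (fmult a g) b | a g b. a \<in> A1 \<and> g \<in> Wset k (2 * 100^(k\<^sup>2)) \<and> b \<in> A1} \<subseteq> Wk k"
    using gen_general by blast
qed

lemma A_closed_add: "f \<in> A \<Longrightarrow> g \<in> A \<Longrightarrow> f + g \<in> A"
  by (simp add: A_def fin_supp_add)
lemma A_closed_scale: "f \<in> A \<Longrightarrow> fscale c f \<in> A"
  using fin_supp_scale[of f c] by (simp add: A_def fscale_def)
lemma A_zero: "0 \<in> A"
  by (simp add: A_def fin_supp_zero)
lemma fmult_nil: "fmult f g [] = f [] * g []"
  by (simp add: fmult_def)

lemma JJ_ideal: fixes k :: nat assumes "1 \<le> k" shows "is_ideal (JJ k :: 'k::field fa set)"
proof -
  have pos: "0 < (2::nat) * 100^(k\<^sup>2)" by simp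
  let ?S = "{fmult (fmult a g) b | a g b. a \<in> A1 \<and> g \<in> Wset k (2 * 100^(k\<^sup>2)) \<and> b \<in> A1} :: 'k fa set"
  have sub1: "h \<in> A" if hJ: "h \<in> JJ k" for h :: "'k fa"
    using hJ[unfolded JJ_def]
    proof (rule kspan_induct_closed)
      show "?S \<subseteq> A"
      proof
        fix t assume "t \<in> ?S"
        then obtain a g b where t: "t = fmult (fmult a g) b" and abg: "a \<in> A1" "g \<in> Wset k (2 * 100^(k\<^sup>2))" "b \<in> A1" by blast
        have gA: "g \<in> A" using Wset_A[OF abg(2) pos] .
        then show "t \<in> A" unfolding t using abg
          by (auto simp: A_def fmult_nil A1_def intro!: fin_supp_fmult)
      qed
      show "0 \<in> A" by (rule A_zero)
      show "f + g \<in> A" if "f \<in> A" "g \<in> A" for f g :: "'k fa" using that by (rule A_closed_add)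
      show "fscale c f \<in> A" if "f \<in> A" for c and f :: "'k fa" using that by (rule A_closed_scale)
    qed
  have sub: "(JJ k :: 'k fa set) \<subseteq> A" using sub1 by blast
  have left: "fmult c f \<in> JJ k" if c: "c \<in> A" and f: "f \<in> JJ k" for c f :: "'k fa"
  proof -
    have "f \<in> {f. fmult c f \<in> JJ k}" using f unfolding JJ_def
    proof (rule kspan_induct_closed)
      show "?S \<subseteq> {f. fmult c f \<in> kspan ?S}"
      proof
        fix t assume "t \<in> ?S"
        then obtain a g b where t: "t = fmult (fmult a g) b" and abg: "a \<in> A1" "g \<in> Wset k (2 * 100^(k\<^sup>2))" "b \<in> A1" by blast
        have "fmult c t = fmult (fmult (fmult c a) g) b" unfolding t by (simp add: fmult_assoc)
        then show "t \<in> {f. fmult c f \<in> kspan ?S}" using abg c A_A1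
          by (auto intro!: kspan.span_gen A1_mult)
      qed
    qed (auto simp: fmult_add_right fmult_scale_right intro: kspan_zero kspan_add kspan.span_scale)
    then show ?thesis unfolding JJ_def by simp
  qed
  have right: "fmult f c \<in> JJ k" if c: "c \<in> A" and f: "f \<in> JJ k" for c f :: "'k fa"
  proof -
    have "f \<in> {f. fmult f c \<in> JJ k}" using f unfolding JJ_def
    proof (rule kspan_induct_closed)
      show "?S \<subseteq> {f. fmult f c \<in> kspan ?S}"
      proof
        fix t assume "t \<in> ?S"
        then obtain a g b where t: "t = fmult (fmult a g) b" and abg: "a \<in> A1" "g \<in> Wset k (2 * 100^(k\<^sup>2))" "b \<in> A1" by blast
        have "fmult t c = fmult (fmult a g) (fmult b c)" unfolding t by (simp add: fmult_assoc)
        then show "t \<in> {f. fmult f c \<in> kspan ?S}" using abg c A_A1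
          by (auto intro!: kspan.span_gen A1_mult)
      qed
    qed (auto simp: fmult_add_left fmult_scale_left intro: kspan_zero kspan_add kspan.span_scale)
    then show ?thesis unfolding JJ_def by simp
  qed
  show ?thesis unfolding is_ideal_def
  proof (intro conjI ballI allI)
    show "(JJ k :: 'k fa set) \<subseteq> A" by (rule sub)
    show "fzero \<in> (JJ k :: 'k fa set)" unfolding JJ_def by (rule kspan.span_zero)
    show "fadd f g \<in> JJ k" if "f \<in> JJ k" "g \<in> JJ k" for f g :: "'k fa"
      using that unfolding JJ_def by (rule kspan.span_add)
    show "fscale c f \<in> JJ k" if "f \<in> JJ k" for c and f :: "'k fa"
      using that unfolding JJ_def by (rule kspan.span_scale)
    show "fmult a f \<in> JJ k" if "a \<in> A" "f \<in> JJ k" for a f :: "'k fa"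
      using that by (rule left)
    show "fmult f a \<in> JJ k" if "a \<in> A" "f \<in> JJ k" for a f :: "'k fa"
      using that by (rule right)
  qed
qed

lemma S_JJ: "Wset k (2 * 100^(k\<^sup>2)) \<subseteq> (JJ k :: 'k::field fa set)"
proof
  fix g :: "'k fa" assume g: "g \<in> Wset k (2 * 100^(k\<^sup>2))"
  have "g = fmult (fmult (mono []) g) (mono [])" by (simp add: mono_Nil_left mono_Nil_right)
  moreover have "fmult (fmult (mono []) g) (mono []) \<in> JJ k" unfolding JJ_def
    using g mono_A1 by (intro kspan.span_gen) blast
  ultimately show "g \<in> JJ k" by simp
qed

theorem mainTheorem2:
  fixes k :: nat
  assumes "1 \<le> k"
  shows "(Ik k :: 'k::field fa set) \<subseteq> Wk k"
proof -
  have "Ik k \<subseteq> (JJ k :: 'k fa set)"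
    unfolding Ik_def ideal_gen_def using JJ_ideal[OF assms] S_JJ by blast
  then show ?thesis using JJ_Wk by blast
qed

end
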